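(* Let $k\in\mathbb{N}$ and for $n\in\mathbb{N}$ let $g(n)$ denote the maximum number of edges of an induced subgraph on $n$ vertices of the rectangular grid $\mathbb{Z}^k$. Then $g(1)=0$ and, for $n\ge 2$, \[ g(n)\le\max_{\substack{n_1+n_2=n\\ n_1,n_2\ge1}}\left(\min(n_1,n_2)+g(n_1)+g(n_2)\right). \]
   Context: The rectangular grid $\mathbb{Z}^k$ is the infinite graph with vertex set $\mathbb{Z}^k$ in which two points are adjacent iff their Manhattan distance $\sum_{i=1}^k|x_i-y_i|$ equals $1$. *)

theory Defs
  imports Main
begin

definition grid_pts :: "nat \<Rightarrow> int list set" where
  "grid_pts k = {x. length x = k}"

definition grid_adj :: "int list \<Rightarrow> int list \<Rightarrow> bool" where
  "grid_adj x y \<longleftrightarrow> length x = length y \<and> (\<Sum>i<length x. \<bar>x ! i - y ! i\<bar>) = 1"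

definition induced_edges :: "int list set \<Rightarrow> nat" where
  "induced_edges S = card {{x, y} | x y. x \<in> S \<and> y \<in> S \<and> grid_adj x y}"

definition grid_g :: "nat \<Rightarrow> nat \<Rightarrow> nat" where
  "grid_g k n = Max {induced_edges S | S. S \<subseteq> grid_pts k \<and> finite S \<and> card S = n}"

end

theory Submission
  imports Defs
begin

lemma adj_sym: "grid_adj x y = grid_adj y x"
proof -
  have "(\<Sum>i<n. \<bar>x ! i - y ! i\<bar>) = (\<Sum>i<n. \<bar>y ! i - x ! i\<bar>)" for n :: nat
    by (simp add: abs_minus_commute)
  from this[of "length x"] show ?thesis unfolding grid_adj_def by (metis (no_types, lifting))
qed

lemma adj_irrefl: "\<not> grid_adj x x"
  unfolding grid_adj_def by simp

lemma adj_cross: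
  assumes "grid_adj x y" "i < length x" "x!i < y!i"
  shows "y = x[i := x!i + 1]"
proof -
  let ?f = "\<lambda>j. \<bar>x!j - y!j\<bar>"
  have len: "length y = length x" using assms(1) grid_adj_def by auto
  have s: "(\<Sum>j<length x. ?f j) = 1" using assms(1) unfolding grid_adj_def by blast
  have split: "(\<Sum>j<length x. ?f j) = ?f i + (\<Sum>j\<in>{..<length x}-{i}. ?f j)"
    using assms(2) by (simp add: sum.remove)
  have ge: "?f i \<ge> 1" using assms(3) by simp
  have nn: "(\<Sum>j\<in>{..<length x}-{i}. ?f j) \<ge> 0" by (simp add: sum_nonneg)
  have fi: "?f i = 1" and rest: "(\<Sum>j\<in>{..<length x}-{i}. ?f j) = 0"
    using s split ge nn by linarith+
  have z: "\<forall>j\<in>{..<length x}-{i}. ?f j = 0"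
    using rest by (subst (asm) sum_nonneg_eq_0_iff) auto
  show ?thesis
  proof (rule nth_equalityI)
    show "length y = length (x[i := x!i+1])" using len by simp
    fix j assume "j < length y"
    then show "y!j = x[i := x!i+1] ! j" using z fi assms(3) len by (cases "j = i") auto
  qed
qed

lemma E_sub: "{{x, y} | x y. x \<in> S \<and> y \<in> S \<and> grid_adj x y} \<subseteq> Pow S"
  by auto

lemma edge_le: "finite S \<Longrightarrow> induced_edges S \<le> 2 ^ card S"
  unfolding induced_edges_def
  by (metis (no_types, lifting) E_sub card_Pow card_mono finite_Pow_iff)

lemma vals_fin: "finite {induced_edges S | S. S \<subseteq> grid_pts k \<and> finite S \<and> card S = n}"
  by (rule finite_subset[of _ "{..2^n}"]) (auto intro: edge_le)

lemma exists_set: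
  assumes "k \<ge> 1"
  shows "\<exists>S. S \<subseteq> grid_pts k \<and> finite S \<and> card S = n"
proof -
  let ?S = "(\<lambda>j. int j # replicate (k-1) 0) ` {..<n}"
  have "inj_on (\<lambda>j. int j # replicate (k-1) (0::int)) {..<n}" by (auto simp: inj_on_def)
  then have "card ?S = n" by (simp add: card_image)
  moreover have "?S \<subseteq> grid_pts k" using assms by (auto simp: grid_pts_def)
  ultimately show ?thesis by blast
qed

lemma edge_bound:
  assumes "finite S" "S \<subseteq> grid_pts k"
  shows "induced_edges S \<le> grid_g k (card S)"
  unfolding grid_g_def by (rule Max_ge[OF vals_fin]) (use assms in blast)

lemma attained:
  assumes "k \<ge> 1"
  obtains S where "S \<subseteq> grid_pts k" "finite S" "card S = n" "induced_edges S = grid_g k n"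
proof -
  have "grid_g k n \<in> {induced_edges S | S. S \<subseteq> grid_pts k \<and> finite S \<and> card S = n}"
    unfolding grid_g_def using exists_set[OF assms, of n] by (intro Max_in[OF vals_fin]) auto
  then show ?thesis using that by auto
qed

lemma split_bound:
  assumes S: "S \<subseteq> grid_pts k" "finite S" "card S \<ge> 2"
  shows "\<exists>n1 n2. n1 + n2 = card S \<and> n1 \<ge> 1 \<and> n2 \<ge> 1 \<and>
     induced_edges S \<le> min n1 n2 + grid_g k n1 + grid_g k n2"
proof -
  obtain x y where xy: "x \<in> S" "y \<in> S" "x \<noteq> y"
    proof -
    have "\<not> card S \<le> Suc 0" using S(3) by simp
    then show ?thesis using that S(2) card_le_Suc0_iff_eq by blast
  qed
  have lx: "length x = k" and ly: "length y = k" using xy S(1) by (auto simp: grid_pts_def)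
  obtain i where i: "i < k" "x!i \<noteq> y!i"
    using xy(3) lx ly nth_equalityI by metis
  obtain a b where ab: "a \<in> S" "b \<in> S" "a!i < b!i"
    using i xy by (metis linorder_neqE)
  define t where "t = a!i"
  define S1 where "S1 = {z\<in>S. z!i \<le> t}"
  define S2 where "S2 = {z\<in>S. \<not> z!i \<le> t}"
  have fin1: "finite S1" and fin2: "finite S2" using S(2) by (auto simp: S1_def S2_def)
  have sub1: "S1 \<subseteq> grid_pts k" and sub2: "S2 \<subseteq> grid_pts k" using S(1) by (auto simp: S1_def S2_def)
  have a1: "a \<in> S1" and b2: "b \<in> S2" using ab by (auto simp: S1_def S2_def t_def)
  have n1: "card S1 \<ge> 1" using fin1 a1 by (metis One_nat_def Suc_leI card_gt_0_iff empty_iff)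
  have n2: "card S2 \<ge> 1" using fin2 b2 by (metis One_nat_def Suc_leI card_gt_0_iff empty_iff)
  have un: "S = S1 \<union> S2" "S1 \<inter> S2 = {}" by (auto simp: S1_def S2_def)
  have csum: "card S1 + card S2 = card S" using un fin1 fin2 by (simp add: card_Un_disjoint)
  define E where "E = (\<lambda>T. {{x, y} | x y. x \<in> T \<and> y \<in> T \<and> grid_adj x y})"
  define C where "C = {{x, y} | x y. x \<in> S1 \<and> y \<in> S2 \<and> grid_adj x y}"
  have cross: "y = x[i := x!i + 1]" if "x \<in> S1" "y \<in> S2" "grid_adj x y" for x y
  proof (rule adj_cross[OF that(3)])
    show "i < length x" using that(1) sub1 i(1) by (auto simp: grid_pts_def)
    show "x!i < y!i" using that(1,2) by (auto simp: S1_def S2_def)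
  qed
  have C1: "C \<subseteq> (\<lambda>x. {x, x[i := x!i + 1]}) ` S1" unfolding C_def using cross by blast
  have C2: "C \<subseteq> (\<lambda>y. {y[i := y!i - 1], y}) ` S2"
  proof
    fix e assume "e \<in> C"
    then obtain x y where e: "e = {x,y}" "x \<in> S1" "y \<in> S2" "grid_adj x y" unfolding C_def by blast
    have "y = x[i := x!i + 1]" using cross e by blast
    moreover have "i < length x" using e(2) sub1 i(1) by (auto simp: grid_pts_def)
    ultimately have "x = y[i := y!i - 1]" by simp
    then show "e \<in> (\<lambda>y. {y[i := y!i - 1], y}) ` S2" using e by blast
  qed
  have finC: "finite C" using C1 fin1 finite_surj by blast
  have cC: "card C \<le> min (card S1) (card S2)"
    using card_mono[OF _ C1] card_mono[OF _ C2] card_image_le[OF fin1] card_image_le[OF fin2]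
      fin1 fin2 by (meson finite_imageI le_trans min.boundedI)
  have finE: "finite (E T)" if "finite T" for T
    using finite_subset[OF E_sub[of T]] that unfolding E_def by blast
  have Esub: "E S \<subseteq> E S1 \<union> E S2 \<union> C"
  proof
    fix e assume "e \<in> E S"
    then obtain x y where e: "e = {x,y}" "x \<in> S" "y \<in> S" "grid_adj x y" unfolding E_def by blast
    show "e \<in> E S1 \<union> E S2 \<union> C"
    proof (cases "x \<in> S1")
      case True
      show ?thesis
      proof (cases "y \<in> S1")
        case True then show ?thesis using \<open>x \<in> S1\<close> e unfolding E_def by blast
      next
        case False then have "y \<in> S2" using e un by blast
        then show ?thesis using \<open>x \<in> S1\<close> e unfolding C_def by blast
      qed
    next
      case False then have x2: "x \<in> S2" using e un by blast
      show ?thesis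
      proof (cases "y \<in> S1")
        case True
        have "e = {y,x}" "grid_adj y x" using e adj_sym by auto
        then show ?thesis using True x2 unfolding C_def by blast
      next
        case False then have "y \<in> S2" using e un by blast
        then show ?thesis using x2 e unfolding E_def by blast
      qed
    qed
  qed
  have "card (E S) \<le> card (E S1 \<union> E S2 \<union> C)"
    by (rule card_mono[OF _ Esub]) (use finE fin1 fin2 finC in auto)
  also have "\<dots> \<le> card (E S1) + card (E S2) + card C"
    by (meson add_le_mono card_Un_le le_trans order_refl)
  finally have "induced_edges S \<le> induced_edges S1 + induced_edges S2 + min (card S1) (card S2)"
    using cC unfolding induced_edges_def E_def by linarith
  moreover have "induced_edges S1 \<le> grid_g k (card S1)" by (rule edge_bound[OF fin1 sub1])
  moreover have "induced_edges S2 \<le> grid_g k (card S2)" by (rule edge_bound[OF fin2 sub2])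
  ultimately show ?thesis using csum n1 n2 by (intro exI[of _ "card S1"] exI[of _ "card S2"]) auto
qed

theorem mainTheorem13:
  fixes k :: nat
  assumes "k \<ge> 1"
  shows "grid_g k 1 = 0 \<and>
    (\<forall>n\<ge>2. grid_g k n \<le>
       Max {min n1 n2 + grid_g k n1 + grid_g k n2 | n1 n2. n1 + n2 = n \<and> n1 \<ge> 1 \<and> n2 \<ge> 1})"
proof
  have "{induced_edges S | S. S \<subseteq> grid_pts k \<and> finite S \<and> card S = 1} = {0}"
  proof -
    have "induced_edges S = 0" if c1: "card S = 1" for S
    proof -
      obtain a where "S = {a}" using c1 by (rule card_1_singletonE)
      then show ?thesis unfolding induced_edges_def using adj_irrefl by auto
    qed
    then show ?thesis using exists_set[OF assms, of 1] by fastforce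
  qed
  then show "grid_g k 1 = 0" unfolding grid_g_def by simp
next
  show "\<forall>n\<ge>2. grid_g k n \<le>
       Max {min n1 n2 + grid_g k n1 + grid_g k n2 | n1 n2. n1 + n2 = n \<and> n1 \<ge> 1 \<and> n2 \<ge> 1}"
  proof (intro allI impI)
    fix n :: nat assume n: "n \<ge> 2"
    obtain S where S: "S \<subseteq> grid_pts k" "finite S" "card S = n" "induced_edges S = grid_g k n"
      using attained[OF assms] by blast
    obtain n1 n2 where nn: "n1 + n2 = n" "n1 \<ge> 1" "n2 \<ge> 1"
      "induced_edges S \<le> min n1 n2 + grid_g k n1 + grid_g k n2"
      using split_bound[OF S(1,2)] S(3) n by auto
    let ?M = "{min n1 n2 + grid_g k n1 + grid_g k n2 | n1 n2. n1 + n2 = n \<and> n1 \<ge> 1 \<and> n2 \<ge> 1}"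
    have fin: "finite ?M"
    proof (rule finite_subset[of _ "(\<lambda>a. min a (n-a) + grid_g k a + grid_g k (n-a)) ` {..n}"])
      show "?M \<subseteq> (\<lambda>a. min a (n-a) + grid_g k a + grid_g k (n-a)) ` {..n}"
      proof
        fix m assume "m \<in> ?M"
        then obtain a b where m: "m = min a b + grid_g k a + grid_g k b" "a + b = n" by blast
        then have "b = n - a" "a \<in> {..n}" by auto
        then show "m \<in> (\<lambda>a. min a (n-a) + grid_g k a + grid_g k (n-a)) ` {..n}"
          using m by blast
      qed
    qed simp
    have "min n1 n2 + grid_g k n1 + grid_g k n2 \<le> Max ?M"
      by (rule Max_ge[OF fin]) (use nn in blast)
    then show "grid_g k n \<le> Max ?M" using nn S(4) by linarith
  qed
qed

end
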